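(* Let $n\geq1$. Every connected component of an effectively open subset of $\mathbb{R}^n$ is effectively open.
   Context: A subset of $\mathbb{R}^n$ is effectively open if it equals $\bigcup_{a\in W}\beta_a$ for some c.e. set $W\subseteq\omega$, where $\beta$ is a standard computable numbering of all rational open balls $B(a,r)$ with $a\in\mathbb{Q}^n$, $r\in\mathbb{Q}^+$ (together with the empty ball). *)

theory Defs
  imports "HOL-Analysis.Analysis" "HOL-Library.Nat_Bijection"
begin

text \<open>Syntax of primitive recursive function terms (lenient arity:
missing arguments are read as 0; this does not enlarge the class of
functions obtained, all of which remain primitive recursive).\<close>

datatype recf = Zf | Sf | Idf nat | Cnf recf "recf list" | Prf recf recf

fun arg :: "nat list \<Rightarrow> nat \<Rightarrow> nat" where
  "arg xs i = (if i < length xs then xs ! i else 0)"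

fun eval_recf :: "recf \<Rightarrow> nat list \<Rightarrow> nat" where
  "eval_recf Zf xs = 0"
| "eval_recf Sf xs = Suc (arg xs 0)"
| "eval_recf (Idf i) xs = arg xs i"
| "eval_recf (Cnf f gs) xs = eval_recf f (map (\<lambda>g. eval_recf g xs) gs)"
| "eval_recf (Prf f g) xs =
     rec_nat (eval_recf f (tl xs)) (\<lambda>k r. eval_recf g (r # k # tl xs)) (arg xs 0)"

text \<open>A set of naturals is computably enumerable iff it is the projection
of a primitive recursive relation (Kleene normal form).\<close>

definition ce :: "nat set \<Rightarrow> bool" where
  "ce W \<longleftrightarrow> (\<exists>f. W = {x. \<exists>y. eval_recf f [x, y] = 0})"

text \<open>Rationals: code k = <s,<p,d>> denotes (-1)^s * p/(d+1).\<close>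
definition rat_of_code :: "nat \<Rightarrow> real" where
  "rat_of_code k = (case prod_decode k of (s, m) \<Rightarrow>
      (case prod_decode m of (p, d) \<Rightarrow>
         (if s = 0 then 1 else -1) * real p / real (Suc d)))"

definition coord_idx :: "'n::finite \<Rightarrow> nat" where
  "coord_idx = (SOME f. bij_betw f (UNIV :: 'n set) {..<CARD('n)})"

text \<open>Ball code a = <c, r>: c codes the list of centre coordinates,
r codes the radius; a non-positive radius yields the empty ball.\<close>
definition beta :: "nat \<Rightarrow> (real ^ 'n::finite) set" where
  "beta a = (case prod_decode a of (c, r) \<Rightarrow>
      ball (\<chi> i. rat_of_code (arg (list_decode c) (coord_idx i))) (rat_of_code r))"

definition eff_open :: "(real ^ 'n::finite) set \<Rightarrow> bool" where
  "eff_open U \<longleftrightarrow> (\<exists>W. ce W \<and> U = (\<Union>a\<in>W. beta a))"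

end

theory Submission
  imports Defs
begin



declare arg.simps[simp del]

lemma arg_Nil[simp]: "arg [] i = 0" by (simp add: arg.simps)
lemma arg_Cons0[simp]: "arg (x#xs) 0 = x" by (simp add: arg.simps)
lemma arg_ConsS[simp]: "arg (x#xs) (Suc i) = arg xs i" by (simp add: arg.simps)
lemma arg_tl[simp]: "arg (tl xs) i = arg xs (Suc i)" by (cases xs) auto
lemma arg_drop: "arg (drop k xs) i = arg xs (k+i)" by (auto simp: arg.simps)
lemma arg_append: "arg (A @ B) p = (if p < length A then A!p else arg B (p - length A))"
  by (auto simp: arg.simps nth_append)
lemma arg_map_upt: "i < N \<Longrightarrow> arg (map f [0..<N]) i = f i"
  by (simp add: arg.simps)

definition pr :: "(nat list \<Rightarrow> nat) \<Rightarrow> bool" where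
  "pr h \<longleftrightarrow> (\<exists>f. \<forall>xs. eval_recf f xs = h xs)"

definition supp :: "nat \<Rightarrow> (nat list \<Rightarrow> nat) \<Rightarrow> bool" where
  "supp N h \<longleftrightarrow> (\<forall>xs ys. (\<forall>i<N. arg xs i = arg ys i) \<longrightarrow> h xs = h ys)"

lemma supp_mono: "supp N h \<Longrightarrow> N \<le> M \<Longrightarrow> supp M h"
  unfolding supp_def by auto

lemma supp_list: "\<forall>g\<in>set gs. \<exists>N. supp N g \<Longrightarrow> \<exists>N. \<forall>g\<in>set gs. supp N g"
proof (induction gs)
  case Nil then show ?case by auto
next
  case (Cons g gs)
  then obtain N1 N2 where "supp N1 g" "\<forall>g\<in>set gs. supp N2 g" by auto
  then show ?case by (intro exI[of _ "max N1 N2"]) (auto intro: supp_mono)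
qed

lemma eval_supp: "\<exists>N. supp N (eval_recf f)"
proof (induction f)
  case Zf then show ?case by (auto simp: supp_def)
next
  case Sf then show ?case by (intro exI[of _ 1]) (auto simp: supp_def)
next
  case (Idf i) then show ?case by (intro exI[of _ "Suc i"]) (auto simp: supp_def)
next
  case (Cnf f gs)
  then obtain N where N: "\<forall>g\<in>set gs. supp N (eval_recf g)" using supp_list[of "map eval_recf gs"] by auto
  show ?case
  proof (intro exI[of _ N], unfold supp_def, intro allI impI)
    fix xs ys :: "nat list" assume "\<forall>i<N. arg xs i = arg ys i"
    then have "map (\<lambda>g. eval_recf g xs) gs = map (\<lambda>g. eval_recf g ys) gs"
      using N by (auto simp: supp_def)
    then show "eval_recf (Cnf f gs) xs = eval_recf (Cnf f gs) ys" by (simp del: map_eq_conv)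
  qed
next
  case (Prf f g)
  then obtain N1 N2 where N1: "supp N1 (eval_recf f)" and N2: "supp N2 (eval_recf g)" by auto
  show ?case
  proof (intro exI[of _ "Suc (N1 + N2)"], unfold supp_def, intro allI impI)
    fix xs ys :: "nat list" assume A: "\<forall>i<Suc (N1+N2). arg xs i = arg ys i"
    have 0: "arg xs 0 = arg ys 0" using A by auto
    have b: "eval_recf f (tl xs) = eval_recf f (tl ys)"
    proof -
      have "\<forall>i<N1. arg (tl xs) i = arg (tl ys) i" using A by simp
      then show ?thesis using N1 unfolding supp_def by blast
    qed
    have s: "eval_recf g (r # k # tl xs) = eval_recf g (r # k # tl ys)" for r k
    proof -
      have "\<forall>i<N2. arg (r # k # tl xs) i = arg (r # k # tl ys) i"
      proof (intro allI impI)
        fix i assume "i < N2"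
        show "arg (r # k # tl xs) i = arg (r # k # tl ys) i"
        proof (cases i)
          case (Suc j) then show ?thesis
          proof (cases j)
            case (Suc j') then have "Suc j' < Suc (N1+N2)" using \<open>i<N2\<close> \<open>i = Suc j\<close> by simp
            then show ?thesis using A \<open>i = Suc j\<close> Suc by simp
          qed simp
        qed simp
      qed
      then show ?thesis using N2 unfolding supp_def by blast
    qed
    show "eval_recf (Prf f g) xs = eval_recf (Prf f g) ys"
    proof -
      have R: "rec_nat a (\<lambda>k r. eval_recf g (r # k # tl xs)) n = rec_nat a (\<lambda>k r. eval_recf g (r # k # tl ys)) n" for a n
        by (induction n) (simp_all only: old.nat.rec s)
      show ?thesis by (simp only: eval_recf.simps 0 b R)
    qed
  qed
qed

lemma prf_supp: "pr h \<Longrightarrow> \<exists>N. supp N h"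
proof -
  assume "pr h"
  then obtain f where "\<forall>xs. eval_recf f xs = h xs" by (auto simp: pr_def)
  then have "h = eval_recf f" by auto
  then show ?thesis using eval_supp by simp
qed

lemma supp_map: "supp N h \<Longrightarrow> h xs = h (map (arg xs) [0..<N])"
proof -
  assume "supp N h"
  have "\<forall>i<N. arg xs i = arg (map (arg xs) [0..<N]) i" by (simp add: arg_map_upt)
  then show ?thesis using \<open>supp N h\<close> unfolding supp_def by blast
qed

lemma prf_list: "\<forall>g\<in>set gs. pr g \<Longrightarrow> \<exists>fs. \<forall>xs. map (\<lambda>f. eval_recf f xs) fs = map (\<lambda>g. g xs) gs"
proof (induction gs)
  case Nil then show ?case by auto
next
  case (Cons g gs)
  then obtain f fs where "\<forall>xs. eval_recf f xs = g xs" "\<forall>xs. map (\<lambda>f. eval_recf f xs) fs = map (\<lambda>g. g xs) gs"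
    by (auto simp: pr_def)
  then show ?case by (intro exI[of _ "f#fs"]) auto
qed

lemma prf_comp: "pr h \<Longrightarrow> \<forall>g\<in>set gs. pr g \<Longrightarrow> pr (\<lambda>xs. h (map (\<lambda>g. g xs) gs))"
proof -
  assume "pr h" "\<forall>g\<in>set gs. pr g"
  from \<open>pr h\<close> obtain f where f: "\<forall>xs. eval_recf f xs = h xs" by (auto simp: pr_def)
  from prf_list[OF \<open>\<forall>g\<in>set gs. pr g\<close>] obtain fs where "\<forall>xs. map (\<lambda>f. eval_recf f xs) fs = map (\<lambda>g. g xs) gs" by blast
  with f show ?thesis unfolding pr_def by (intro exI[of _ "Cnf f fs"]) auto
qed

lemma prf_rec: "pr f \<Longrightarrow> pr g \<Longrightarrow> pr (\<lambda>xs. rec_nat (f (tl xs)) (\<lambda>k r. g (r # k # tl xs)) (arg xs 0))"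
proof -
  assume "pr f" "pr g"
  then obtain a b where "\<forall>xs. eval_recf a xs = f xs" "\<forall>xs. eval_recf b xs = g xs" by (auto simp: pr_def)
  then show ?thesis unfolding pr_def by (intro exI[of _ "Prf a b"]) simp
qed

lemma prf_arg[intro]: "pr (\<lambda>xs. arg xs i)"
  unfolding pr_def by (intro exI[of _ "Idf i"]) simp

lemma prf_zero: "pr (\<lambda>xs. 0)"
  unfolding pr_def by (intro exI[of _ "Zf"]) simp

lemma prf_Suc0: "pr (\<lambda>xs. Suc (arg xs 0))"
  unfolding pr_def by (intro exI[of _ "Sf"]) simp

lemma prf_Suc[intro]: "pr g \<Longrightarrow> pr (\<lambda>xs. Suc (g xs))"
proof -
  assume "pr g"
  have "pr (\<lambda>xs. (\<lambda>L. Suc (arg L 0)) (map (\<lambda>g. g xs) [g]))"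
    using prf_comp[OF prf_Suc0, of "[g]"] \<open>pr g\<close> by simp
  then show ?thesis by simp
qed

lemma prf_const[intro]: "pr (\<lambda>xs. c)"
  by (induction c) (auto intro: prf_zero)

lemma prf_subst: "pr h \<Longrightarrow> \<forall>g\<in>set gs. pr g \<Longrightarrow> pr (\<lambda>xs. h (map (\<lambda>g. g xs) gs @ drop k xs))"
proof -
  assume h: "pr h" and gs: "\<forall>g\<in>set gs. pr g"
  obtain N where N: "supp N h" using prf_supp h by auto
  let ?gs = "gs @ map (\<lambda>i xs. arg xs (k+i)) [0..<N]"
  have eq: "h (map (\<lambda>g. g xs) gs @ drop k xs) = h (map (\<lambda>g. g xs) ?gs)" for xs
  proof -
    have "\<forall>i<N. arg (map (\<lambda>g. g xs) gs @ drop k xs) i = arg (map (\<lambda>g. g xs) ?gs) i"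
      by (auto simp: arg_append arg_drop arg_map_upt)
    then show ?thesis using N unfolding supp_def by blast
  qed
  have "pr (\<lambda>xs. h (map (\<lambda>g. g xs) ?gs))"
    using prf_comp[OF h, of ?gs] gs by auto
  then show ?thesis by (simp only: eq)
qed

lemma prf_cons: "pr h \<Longrightarrow> pr g \<Longrightarrow> pr (\<lambda>xs. h (g xs # xs))"
proof -
  assume "pr h" "pr g"
  have "pr (\<lambda>xs. h (map (\<lambda>g. g xs) [g] @ drop 0 xs))" using prf_subst[of h "[g]" 0] \<open>pr h\<close> \<open>pr g\<close> by simp
  then show ?thesis by (simp only: list.map append.simps drop_0)
qed

lemma prf_drop: "pr h \<Longrightarrow> pr (\<lambda>xs. h (drop k xs))"
proof -
  assume "pr h"
  have "pr (\<lambda>xs. h (map (\<lambda>g. g xs) [] @ drop k xs))" using prf_subst[of h "[]" k] \<open>pr h\<close> by simp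
  then show ?thesis by (simp only: list.map append.simps)
qed

lemma prf_rec2: "pr b \<Longrightarrow> pr s \<Longrightarrow> pr t \<Longrightarrow> pr (\<lambda>xs. rec_nat (b xs) (\<lambda>k r. s (r # k # xs)) (t xs))"
proof -
  assume b: "pr b" and s: "pr s" and t: "pr t"
  have "pr (\<lambda>xs. rec_nat (b (tl xs)) (\<lambda>k r. s (r # k # tl xs)) (arg xs 0))"
    by (rule prf_rec[OF b s])
  from prf_cons[OF this t] show ?thesis by (simp only: list.sel arg_Cons0)
qed




lemma prf_rec3:
  assumes "pr b" "pr s" "pr t" "\<And>xs. F xs = rec_nat (b xs) (\<lambda>k r. s (r#k#xs)) (t xs)"
  shows "pr F"
proof -
  have "F = (\<lambda>xs. rec_nat (b xs) (\<lambda>k r. s (r#k#xs)) (t xs))" using assms(4) by auto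
  then show ?thesis using prf_rec2[OF assms(1-3)] by simp
qed

lemma drop2: "drop (Suc (Suc 0)) (r#k#xs) = xs" by simp

lemma rec_add: "rec_nat a (\<lambda>k r. Suc r) n = a + n" by (induction n) auto
lemma rec_mult: "rec_nat 0 (\<lambda>k r. r + c) n = c * n" by (induction n) auto
lemma rec_pred: "rec_nat 0 (\<lambda>k r. k) n = n - 1" by (induction n) auto
lemma rec_sub: "rec_nat a (\<lambda>k r. r - 1) n = a - n" by (induction n) auto
lemma rec_if: "rec_nat a (\<lambda>k r. b) n = (if n = 0 then a else b)" by (cases n) auto
lemma rec_sum: "rec_nat 0 (\<lambda>k r. r + F k) n = (\<Sum>j<n. F j)" by (induction n) auto
lemma rec_prod: "rec_nat 1 (\<lambda>k r. r * F k) n = (\<Prod>j<n. F j)" by (induction n) (auto simp: mult.commute)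
lemma rec_tri: "rec_nat 0 (\<lambda>k r. r + Suc k) n = triangle n" by (induction n) auto

lemmas simpargs = arg_Cons0 arg_ConsS drop2

lemma prf_add[intro]: assumes f: "pr f" and g: "pr g" shows "pr (\<lambda>xs. f xs + g xs)"
  by (rule prf_rec3[of f "\<lambda>L. Suc (arg L 0)" g]) (intro prf_Suc0 f g | simp only: simpargs rec_add)+

lemma prf_mult[intro]: assumes f: "pr f" and g: "pr g" shows "pr (\<lambda>xs. f xs * g xs)"
  by (rule prf_rec3[of "\<lambda>xs. 0" "\<lambda>L. arg L 0 + f (drop (Suc (Suc 0)) L)" g])
     (intro prf_const prf_add prf_arg prf_drop f g | simp only: simpargs rec_mult)+

lemma prf_pred: assumes f: "pr f" shows "pr (\<lambda>xs. f xs - 1)"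
  by (rule prf_rec3[of "\<lambda>xs. 0" "\<lambda>L. arg L (Suc 0)" f]) (intro prf_const prf_arg f | simp only: simpargs rec_pred)+

lemma prf_sub[intro]: assumes f: "pr f" and g: "pr g" shows "pr (\<lambda>xs. f xs - g xs)"
  by (rule prf_rec3[of f "\<lambda>L. arg L 0 - 1" g]) (intro prf_pred prf_arg f g | simp only: simpargs rec_sub)+

lemma prf_if0[intro]: assumes c: "pr c" and a: "pr a" and b: "pr b"
  shows "pr (\<lambda>xs. if c xs = 0 then a xs else b xs)"
  by (rule prf_rec3[of a "\<lambda>L. b (drop (Suc (Suc 0)) L)" c]) (intro prf_drop a b c | simp only: simpargs rec_if)+

lemmas prfI0 = prf_arg prf_const prf_Suc prf_add prf_mult prf_sub prf_if0

lemma prf_ifeq[intro]: assumes "pr f" "pr g" "pr a" "pr b" shows "pr (\<lambda>xs. if f xs = g xs then a xs else b xs)"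
proof -
  have "pr (\<lambda>xs. if (f xs - g xs) + (g xs - f xs) = 0 then a xs else b xs)" by (intro prfI0 assms)
  moreover have "(\<lambda>xs. if (f xs - g xs) + (g xs - f xs) = 0 then a xs else b xs) = (\<lambda>xs. if f xs = g xs then a xs else b xs)"
    by (auto simp: fun_eq_iff)
  ultimately show ?thesis by simp
qed

lemma prf_ifless[intro]: assumes "pr f" "pr g" "pr a" "pr b" shows "pr (\<lambda>xs. if f xs < g xs then a xs else b xs)"
proof -
  have "pr (\<lambda>xs. if g xs - f xs = 0 then b xs else a xs)" by (intro prfI0 assms)
  moreover have "(\<lambda>xs. if g xs - f xs = 0 then b xs else a xs) = (\<lambda>xs. if f xs < g xs then a xs else b xs)"
    by (auto simp: fun_eq_iff)
  ultimately show ?thesis by simp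
qed

lemma prf_shift1: "pr (\<lambda>L. h (arg L 0) (tl L)) \<Longrightarrow> pr (\<lambda>L. h (arg L (Suc 0)) (drop (Suc (Suc 0)) L))"
proof -
  assume H: "pr (\<lambda>L. h (arg L 0) (tl L))"
  have "pr (\<lambda>L. (\<lambda>L. h (arg L 0) (tl L)) (map (\<lambda>g. g L) [\<lambda>L. arg L (Suc 0)] @ drop (Suc (Suc 0)) L))"
    using prf_subst[OF H, of "[\<lambda>L. arg L (Suc 0)]" "Suc (Suc 0)"] prf_arg by simp
  then show ?thesis by (simp del: drop_Suc_Cons)
qed

lemma prf_sum[intro]: assumes h: "pr (\<lambda>L. h (arg L 0) (tl L))" and t: "pr t" shows "pr (\<lambda>xs. \<Sum>j<t xs. h j xs)"
  by (rule prf_rec3[of "\<lambda>xs. 0" "\<lambda>L. arg L 0 + h (arg L (Suc 0)) (drop (Suc (Suc 0)) L)" t])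
     (intro prf_const prf_add prf_arg prf_shift1 h t | simp only: simpargs rec_sum)+

lemma prf_prod[intro]: assumes h: "pr (\<lambda>L. h (arg L 0) (tl L))" and t: "pr t" shows "pr (\<lambda>xs. \<Prod>j<t xs. h j xs)"
  by (rule prf_rec3[of "\<lambda>xs. 1" "\<lambda>L. arg L 0 * h (arg L (Suc 0)) (drop (Suc (Suc 0)) L)" t])
     (intro prf_const prf_mult prf_arg prf_shift1 h t | simp only: simpargs rec_prod)+

lemma prf_triangle[intro]: assumes g: "pr g" shows "pr (\<lambda>xs. triangle (g xs))"
  by (rule prf_rec3[of "\<lambda>xs. 0" "\<lambda>L. arg L 0 + Suc (arg L (Suc 0))" g])
     (intro prfI0 g | simp only: simpargs rec_tri)+

primrec tdiag :: "nat \<Rightarrow> nat" where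
  "tdiag 0 = 0"
| "tdiag (Suc n) = (if tdiag n - (n - triangle (tdiag n)) = 0 then Suc (tdiag n) else tdiag n)"

lemma tdiag_inv: "triangle (tdiag n) \<le> n \<and> n \<le> triangle (tdiag n) + tdiag n"
  by (induction n) auto

lemma prod_decode_tdiag: "prod_decode n = (n - triangle (tdiag n), tdiag n - (n - triangle (tdiag n)))"
proof -
  have "prod_encode (n - triangle (tdiag n), tdiag n - (n - triangle (tdiag n))) = n"
    using tdiag_inv[of n] by (simp add: prod_encode_def)
  then show ?thesis by (metis prod_encode_inverse)
qed

lemma rec_tdiag: "rec_nat 0 (\<lambda>k r. if r - (k - triangle r) = 0 then Suc r else r) n = tdiag n"
  by (induction n) auto

lemma prf_tdiag[intro]: assumes g: "pr g" shows "pr (\<lambda>xs. tdiag (g xs))"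
  by (rule prf_rec3[of "\<lambda>xs. 0" "\<lambda>L. if arg L 0 - (arg L (Suc 0) - triangle (arg L 0)) = 0 then Suc (arg L 0) else arg L 0" g])
     (intro prfI0 prf_triangle g | simp only: simpargs rec_tdiag)+

lemma prf_pd1[intro]: assumes g: "pr g" shows "pr (\<lambda>xs. fst (prod_decode (g xs)))"
  by (subst prod_decode_tdiag, simp only: fst_conv) (intro prfI0 prf_triangle prf_tdiag g)

lemma prf_pd2[intro]: assumes g: "pr g" shows "pr (\<lambda>xs. snd (prod_decode (g xs)))"
  by (subst prod_decode_tdiag, simp only: snd_conv) (intro prfI0 prf_triangle prf_tdiag g)

definition lhd :: "nat \<Rightarrow> nat" where "lhd c = (if c = 0 then 0 else fst (prod_decode (c - 1)))"
definition ltl :: "nat \<Rightarrow> nat" where "ltl c = (if c = 0 then 0 else snd (prod_decode (c - 1)))"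
definition lnth :: "nat \<Rightarrow> nat \<Rightarrow> nat" where "lnth c j = lhd ((ltl ^^ j) c)"

lemma ltl_pow0: "(ltl ^^ j) 0 = 0" by (induction j) (auto simp: ltl_def)

lemma lnth_correct: "lnth c j = arg (list_decode c) j"
proof (induction j arbitrary: c)
  case 0 then show ?case by (cases c) (auto simp: lnth_def lhd_def split: prod.split)
next
  case (Suc j)
  then show ?case
  proof (cases c)
    case 0 then show ?thesis by (simp add: lnth_def ltl_pow0 lhd_def ltl_def)
  next
    case (Suc m)
    have "lnth c (Suc j) = lnth (ltl c) j" by (simp only: lnth_def funpow_Suc_right comp_def)
    also have "\<dots> = arg (list_decode (ltl c)) j" by (rule Suc.IH)
    also have "\<dots> = arg (list_decode c) (Suc j)" using Suc by (simp add: ltl_def split: prod.split)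
    finally show ?thesis .
  qed
qed

lemma prf_lhd[intro]: assumes g: "pr g" shows "pr (\<lambda>xs. lhd (g xs))"
  unfolding lhd_def by (intro prfI0 prf_pd1 g)

lemma prf_ltl[intro]: assumes g: "pr g" shows "pr (\<lambda>xs. ltl (g xs))"
  unfolding ltl_def by (intro prfI0 prf_pd2 g)

lemma rec_ltl: "rec_nat c (\<lambda>k r. ltl r) n = (ltl ^^ n) c" by (induction n) auto

lemma prf_lnth[intro]: assumes g: "pr g" and h: "pr h" shows "pr (\<lambda>xs. lnth (g xs) (h xs))"
proof -
  have "pr (\<lambda>xs. (ltl ^^ h xs) (g xs))"
    by (rule prf_rec3[of g "\<lambda>L. ltl (arg L 0)" h]) (intro prf_ltl prf_arg g h | simp only: simpargs rec_ltl)+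
  then show ?thesis unfolding lnth_def by (rule prf_lhd)
qed

lemma prf_eval2[intro]: "pr g \<Longrightarrow> pr h \<Longrightarrow> pr (\<lambda>xs. eval_recf f [g xs, h xs])"
proof -
  assume "pr g" "pr h"
  have "pr (eval_recf f)" unfolding pr_def by auto
  from prf_comp[OF this, of "[g,h]"] show ?thesis using \<open>pr g\<close> \<open>pr h\<close> by simp
qed

lemma prf_comp2: "pr (\<lambda>L. F (arg L 0) (arg L (Suc 0))) \<Longrightarrow> pr g \<Longrightarrow> pr h \<Longrightarrow> pr (\<lambda>xs. F (g xs) (h xs))"
proof -
  assume "pr (\<lambda>L. F (arg L 0) (arg L (Suc 0)))" "pr g" "pr h"
  from prf_comp[OF this(1), of "[g,h]"] show ?thesis using \<open>pr g\<close> \<open>pr h\<close> by simp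
qed

lemma prf_tl: "pr (\<lambda>xs. arg (tl xs) i)" by (simp only: arg_tl prf_arg)
lemma prf_tl2: "pr (\<lambda>xs. arg (tl (tl xs)) i)" by (simp only: arg_tl prf_arg)

lemmas prfI = prfI0 prf_ifeq prf_ifless prf_sum prf_prod prf_pd1 prf_pd2 prf_lhd prf_ltl prf_lnth prf_eval2 prf_tl prf_tl2




definition rs :: "nat \<Rightarrow> nat" where "rs k = fst (prod_decode k)"
definition rp :: "nat \<Rightarrow> nat" where "rp k = fst (prod_decode (snd (prod_decode k)))"
definition rd :: "nat \<Rightarrow> nat" where "rd k = Suc (snd (prod_decode (snd (prod_decode k))))"

definition adiff :: "nat \<Rightarrow> nat \<Rightarrow> nat" where
  "adiff k1 k2 = (if rs k1 = 0 then
      (if rs k2 = 0 then (rp k1 * rd k2 - rp k2 * rd k1) + (rp k2 * rd k1 - rp k1 * rd k2) else rp k1 * rd k2 + rp k2 * rd k1)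
    else (if rs k2 = 0 then rp k1 * rd k2 + rp k2 * rd k1 else (rp k1 * rd k2 - rp k2 * rd k1) + (rp k2 * rd k1 - rp k1 * rd k2)))"

definition bb :: "nat \<Rightarrow> nat \<Rightarrow> nat" where "bb k1 k2 = rd k1 * rd k2"

definition mA :: "nat \<Rightarrow> nat \<Rightarrow> nat \<Rightarrow> nat" where "mA u v j = adiff (lnth u j) (lnth v j)"
definition mB :: "nat \<Rightarrow> nat \<Rightarrow> nat \<Rightarrow> nat" where "mB u v j = bb (lnth u j) (lnth v j)"
definition mP :: "nat \<Rightarrow> nat \<Rightarrow> nat \<Rightarrow> nat" where "mP n u v = (\<Prod>k<n. mB u v k * mB u v k)"
definition mQ :: "nat \<Rightarrow> nat \<Rightarrow> nat \<Rightarrow> nat \<Rightarrow> nat" where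
  "mQ n u v j = (\<Prod>k<n. if k = j then 1 else mB u v k * mB u v k)"
definition mS :: "nat \<Rightarrow> nat \<Rightarrow> nat \<Rightarrow> nat" where
  "mS n u v = (\<Sum>j<n. mA u v j * mA u v j * mQ n u v j)"

definition memtest :: "nat \<Rightarrow> nat \<Rightarrow> nat \<Rightarrow> nat" where
  "memtest n e a = (if rs (snd (prod_decode a)) = 0 then
     (if mS n (fst (prod_decode a)) (fst (prod_decode e)) * (rd (snd (prod_decode a)) * rd (snd (prod_decode a)))
        < rp (snd (prod_decode a)) * rp (snd (prod_decode a)) * mP n (fst (prod_decode a)) (fst (prod_decode e))
      then 0 else 1) else 1)"

lemma prf_memtest0: "pr (\<lambda>L. memtest n (arg L 0) (arg L (Suc 0)))"
  unfolding memtest_def mS_def mP_def mQ_def mA_def mB_def adiff_def bb_def rs_def rp_def rd_def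
  by (intro prfI)

lemma prf_memtest[intro]: "pr g \<Longrightarrow> pr h \<Longrightarrow> pr (\<lambda>xs. memtest n (g xs) (h xs))"
  by (rule prf_comp2[OF prf_memtest0])

definition chA :: "nat \<Rightarrow> nat \<Rightarrow> nat" where "chA c i = fst (prod_decode (lnth c i))"
definition chY :: "nat \<Rightarrow> nat \<Rightarrow> nat" where "chY c i = fst (prod_decode (snd (prod_decode (lnth c i))))"
definition chE :: "nat \<Rightarrow> nat \<Rightarrow> nat" where "chE c i = snd (prod_decode (snd (prod_decode (lnth c i))))"

definition check :: "nat \<Rightarrow> nat \<Rightarrow> recf \<Rightarrow> nat \<Rightarrow> nat \<Rightarrow> nat" where
  "check n a0 f0 x z = (if chA (snd (prod_decode z)) 0 = a0 then
     (if chA (snd (prod_decode z)) (fst (prod_decode z)) = x then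
       (\<Sum>i<Suc (fst (prod_decode z)). eval_recf f0 [chA (snd (prod_decode z)) i, chY (snd (prod_decode z)) i] +
          (if i = 0 then 0 else memtest n (chE (snd (prod_decode z)) i) (chA (snd (prod_decode z)) (i - 1))
                               + memtest n (chE (snd (prod_decode z)) i) (chA (snd (prod_decode z)) i)))
      else 1) else 1)"

lemma prf_check: "pr (\<lambda>L. check n a0 f0 (arg L 0) (arg L (Suc 0)))"
  unfolding check_def chA_def chY_def chE_def
  by (intro prfI prf_memtest)

lemma ce_check: "ce {x. \<exists>z. check n a0 f0 x z = 0}"
proof -
  obtain f where "\<forall>xs. eval_recf f xs = check n a0 f0 (arg xs 0) (arg xs (Suc 0))"
    using prf_check unfolding pr_def by blast
  then show ?thesis unfolding ce_def by (intro exI[of _ f]) simp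
qed




inductive_set reach :: "nat \<Rightarrow> nat \<Rightarrow> recf \<Rightarrow> nat set" for n a0 f0 where
  r0: "eval_recf f0 [a0, y] = 0 \<Longrightarrow> a0 \<in> reach n a0 f0"
| rS: "a \<in> reach n a0 f0 \<Longrightarrow> eval_recf f0 [b, y] = 0 \<Longrightarrow> memtest n e a = 0 \<Longrightarrow> memtest n e b = 0 \<Longrightarrow> b \<in> reach n a0 f0"

lemma if_eq0: "(if P then A else (1::nat)) = 0 \<longleftrightarrow> P \<and> A = 0" by auto

lemma check_imp:
  assumes "check n a0 f0 x z = 0"
  shows "x \<in> reach n a0 f0"
proof -
  define c where "c = snd (prod_decode z)"
  define m where "m = fst (prod_decode z)"
  have A0: "chA c 0 = a0" and Am: "chA c m = x"
    and S: "(\<Sum>i<Suc m. eval_recf f0 [chA c i, chY c i] +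
          (if i = 0 then 0 else memtest n (chE c i) (chA c (i - 1)) + memtest n (chE c i) (chA c i))) = 0"
    using assms unfolding check_def c_def[symmetric] m_def[symmetric] if_eq0 by blast+
  have T: "eval_recf f0 [chA c i, chY c i] = 0 \<and> (i \<noteq> 0 \<longrightarrow> memtest n (chE c i) (chA c (i - 1)) = 0 \<and> memtest n (chE c i) (chA c i) = 0)"
    if "i \<le> m" for i
  proof -
    have "i \<in> {..<Suc m}" using that by auto
    with S have "eval_recf f0 [chA c i, chY c i] +
          (if i = 0 then 0 else memtest n (chE c i) (chA c (i - 1)) + memtest n (chE c i) (chA c i)) = 0"
      by (simp only: sum_eq_0_iff finite_lessThan)
    then show ?thesis by (auto split: if_splits)
  qed
  have "i \<le> m \<Longrightarrow> chA c i \<in> reach n a0 f0" for i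
  proof (induction i)
    case 0 then show ?case using T[of 0] A0 by (auto intro: reach.r0)
  next
    case (Suc i)
    then have "chA c i \<in> reach n a0 f0" by auto
    moreover have "eval_recf f0 [chA c (Suc i), chY c (Suc i)] = 0" "memtest n (chE c (Suc i)) (chA c i) = 0"
      "memtest n (chE c (Suc i)) (chA c (Suc i)) = 0" using T[OF Suc.prems] by auto
    ultimately show ?case by (rule reach.rS)
  qed
  then show ?thesis using Am by auto
qed

lemma lnth_enc: "lnth (list_encode L) i = arg L i"
  by (simp add: lnth_correct)

lemma reach_imp:
  assumes "x \<in> reach n a0 f0"
  shows "\<exists>z. check n a0 f0 x z = 0"
  using assms
proof (induction rule: reach.induct)
  case (r0 y)
  let ?z = "prod_encode (0, list_encode [prod_encode (a0, prod_encode (y, 0))])"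
  have "check n a0 f0 a0 ?z = 0"
    unfolding check_def chA_def chY_def chE_def by (simp add: lnth_enc r0 del: list_encode.simps)
  then show ?case by blast
next
  case (rS a b y e)
  then obtain z where z: "check n a0 f0 a z = 0" by blast
  define c where "c = snd (prod_decode z)"
  define m where "m = fst (prod_decode z)"
  have A0: "chA c 0 = a0" and Am: "chA c m = a"
    and S: "(\<Sum>i<Suc m. eval_recf f0 [chA c i, chY c i] +
          (if i = 0 then 0 else memtest n (chE c i) (chA c (i - 1)) + memtest n (chE c i) (chA c i))) = 0"
    using z unfolding check_def c_def[symmetric] m_def[symmetric] if_eq0 by blast+
  define L' where "L' = map (lnth c) [0..<Suc m] @ [prod_encode (b, prod_encode (y, e))]"
  define c' where "c' = list_encode L'"
  have ln: "lnth c' i = (if i \<le> m then lnth c i else if i = Suc m then prod_encode (b, prod_encode (y, e)) else 0)" for i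
    unfolding c'_def lnth_enc L'_def by (auto simp: arg.simps nth_append)
  have eqA: "chA c' i = chA c i" "chY c' i = chY c i" "chE c' i = chE c i" if "i \<le> m" for i
    using that by (simp_all add: chA_def chY_def chE_def ln)
  have newA: "chA c' (Suc m) = b" "chY c' (Suc m) = y" "chE c' (Suc m) = e"
    by (simp_all add: chA_def chY_def chE_def ln)
  let ?T = "\<lambda>c i. eval_recf f0 [chA c i, chY c i] +
          (if i = 0 then 0 else memtest n (chE c i) (chA c (i - 1)) + memtest n (chE c i) (chA c i))"
  have "(\<Sum>i<Suc (Suc m). ?T c' i) = (\<Sum>i<Suc m. ?T c' i) + ?T c' (Suc m)" by simp
  also have "(\<Sum>i<Suc m. ?T c' i) = (\<Sum>i<Suc m. ?T c i)"
    by (rule sum.cong) (auto simp: eqA)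
  also have "?T c' (Suc m) = 0" using newA eqA[of m] Am rS by simp
  finally have SS: "(\<Sum>i<Suc (Suc m). ?T c' i) = 0" by (simp only: S add_0_right)
  have A0': "chA c' 0 = a0" using eqA[of 0] A0 by simp
  have "check n a0 f0 b (prod_encode (Suc m, c')) = 0"
    unfolding check_def by (simp only: prod_encode_inverse fst_conv snd_conv newA A0' SS refl if_True)
  then show ?case by blast
qed

lemma reach_eq: "reach n a0 f0 = {x. \<exists>z. check n a0 f0 x z = 0}"
  using check_imp reach_imp by blast

lemma ce_reach: "ce (reach n a0 f0)"
  unfolding reach_eq by (rule ce_check)




definition center :: "nat \<Rightarrow> real ^ 'n::finite" where
  "center e = (\<chi> i. rat_of_code (arg (list_decode (fst (prod_decode e))) (coord_idx i)))"

definition radius :: "nat \<Rightarrow> real" where "radius a = rat_of_code (snd (prod_decode a))"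

lemma beta_eq: "beta a = ball (center a) (radius a)"
  unfolding beta_def center_def radius_def by (simp split: prod.split)

lemma coord_bij: "bij_betw (coord_idx :: 'n::finite \<Rightarrow> nat) UNIV {..<CARD('n)}"
proof -
  have "\<exists>f. bij_betw f (UNIV :: 'n set) {..<CARD('n)}"
    by (rule finite_same_card_bij) auto
  then show ?thesis unfolding coord_idx_def by (rule someI_ex)
qed

lemma rat_code: "rat_of_code k = (if rs k = 0 then 1 else -1) * real (rp k) / real (rd k)"
  unfolding rat_of_code_def rs_def rp_def rd_def by (simp split: prod.split)

lemma abs_frac: "(d::real) > 0 \<Longrightarrow> e > 0 \<Longrightarrow> \<bar>x/d - y/e\<bar> = \<bar>x*e - y*d\<bar>/(d*e)"
proof -
  assume "d > 0" "e > 0"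
  then have "x/d - y/e = (x*e - y*d)/(d*e)" by (simp add: field_simps)
  then show ?thesis using \<open>d>0\<close> \<open>e>0\<close> by (simp add: abs_divide)
qed

lemma nat_absdiff: "real ((a - b) + (b - a)) = \<bar>real a - real b\<bar>"
  by (cases "a \<le> b") (auto simp: of_nat_diff)

lemma adiff_correct: "\<bar>rat_of_code k1 - rat_of_code k2\<bar> = real (adiff k1 k2) / real (bb k1 k2)"
proof -
  have d1: "real (rd k1) > 0" and d2: "real (rd k2) > 0" by (auto simp: rd_def)
  define p1 where "p1 = real (rp k1)"
  define p2 where "p2 = real (rp k2)"
  define e1 where "e1 = real (rd k1)"
  define e2 where "e2 = real (rd k2)"
  have bb: "real (bb k1 k2) = e1 * e2" by (simp add: bb_def e1_def e2_def)
  have S: "real ((rp k1 * rd k2 - rp k2 * rd k1) + (rp k2 * rd k1 - rp k1 * rd k2)) = \<bar>p1 * e2 - p2 * e1\<bar>"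
    unfolding p1_def p2_def e1_def e2_def by (simp only: nat_absdiff of_nat_mult)
  have D: "real (rp k1 * rd k2 + rp k2 * rd k1) = p1 * e2 + p2 * e1"
    unfolding p1_def p2_def e1_def e2_def by simp
  have nn: "p1 * e2 + p2 * e1 \<ge> 0" unfolding p1_def p2_def e1_def e2_def by simp
  have pos1: "rs k1 = 0 \<Longrightarrow> rat_of_code k1 = p1 / e1" by (simp add: rat_code p1_def e1_def)
  have neg1: "rs k1 \<noteq> 0 \<Longrightarrow> rat_of_code k1 = (- p1) / e1" by (simp add: rat_code p1_def e1_def)
  have pos2: "rs k2 = 0 \<Longrightarrow> rat_of_code k2 = p2 / e2" by (simp add: rat_code p2_def e2_def)
  have neg2: "rs k2 \<noteq> 0 \<Longrightarrow> rat_of_code k2 = (- p2) / e2" by (simp add: rat_code p2_def e2_def)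
  have af: "\<bar>x / e1 - y / e2\<bar> = \<bar>x * e2 - y * e1\<bar> / (e1 * e2)" for x y
    unfolding e1_def e2_def by (rule abs_frac[OF d1 d2])
  show ?thesis
  proof (cases "rs k1 = 0"; cases "rs k2 = 0")
    assume a: "rs k1 = 0" "rs k2 = 0"
    then have "adiff k1 k2 = (rp k1 * rd k2 - rp k2 * rd k1) + (rp k2 * rd k1 - rp k1 * rd k2)" by (simp add: adiff_def)
    then show ?thesis by (simp only: pos1[OF a(1)] pos2[OF a(2)] af S bb)
  next
    assume a: "rs k1 = 0" "rs k2 \<noteq> 0"
    then have "adiff k1 k2 = rp k1 * rd k2 + rp k2 * rd k1" by (simp add: adiff_def)
    moreover have "\<bar>p1 * e2 - (- p2) * e1\<bar> = p1 * e2 + p2 * e1" using nn by simp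
    ultimately show ?thesis by (simp only: pos1[OF a(1)] neg2[OF a(2)] af D bb)
  next
    assume a: "rs k1 \<noteq> 0" "rs k2 = 0"
    then have "adiff k1 k2 = rp k1 * rd k2 + rp k2 * rd k1" by (simp add: adiff_def)
    moreover have "\<bar>(- p1) * e2 - p2 * e1\<bar> = p1 * e2 + p2 * e1" using nn by simp
    ultimately show ?thesis by (simp only: neg1[OF a(1)] pos2[OF a(2)] af D bb)
  next
    assume a: "rs k1 \<noteq> 0" "rs k2 \<noteq> 0"
    then have "adiff k1 k2 = (rp k1 * rd k2 - rp k2 * rd k1) + (rp k2 * rd k1 - rp k1 * rd k2)" by (simp add: adiff_def)
    moreover have "\<bar>(- p1) * e2 - (- p2) * e1\<bar> = \<bar>p1 * e2 - p2 * e1\<bar>"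
    proof -
      have "(- p1) * e2 - (- p2) * e1 = - (p1 * e2 - p2 * e1)" by (simp add: algebra_simps)
      then show ?thesis by (simp only: abs_minus_cancel)
    qed
    ultimately show ?thesis by (simp only: neg1[OF a(1)] neg2[OF a(2)] af S bb)
  qed
qed

lemma key_ineq:
  fixes A B :: "nat \<Rightarrow> nat" and p d n :: nat
  assumes B: "\<And>j. B j > 0" and d: "d > 0"
  shows "(\<Sum>j<n. (real (A j) / real (B j))^2) < (real p / real d)^2 \<longleftrightarrow>
    (\<Sum>j<n. A j * A j * (\<Prod>k<n. if k = j then 1 else B k * B k)) * (d * d) < p * p * (\<Prod>k<n. B k * B k)"
proof -
  define P where "P = (\<Prod>k<n. B k * B k)"
  define Q where "Q j = (\<Prod>k<n. if k = j then 1 else B k * B k)" for j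
  have Ppos: "real P > 0" unfolding P_def using B by (simp add: prod_pos)
  have QP: "real (Q j) * (real (B j))^2 = real P" if "j < n" for j
  proof -
    have N: "Q j * (B j * B j) = P"
    proof -
      have "(\<Prod>k<n. B k * B k) = (B j * B j) * (\<Prod>k\<in>{..<n} - {j}. B k * B k)"
        using that by (subst prod.remove[of _ j]) auto
      moreover have "(\<Prod>k<n. (if k = j then 1 else B k * B k)) = (\<Prod>k\<in>{..<n} - {j}. B k * B k)"
        using that by (subst prod.remove[of _ j]) (auto intro!: prod.cong)
      ultimately show ?thesis unfolding P_def Q_def by simp
    qed
    have "real (Q j * (B j * B j)) = real P" using N by (rule arg_cong)
    then show ?thesis by (simp add: power2_eq_square)
  qed
  have "(\<Sum>j<n. (real (A j) / real (B j))^2) = (\<Sum>j<n. real (A j * A j * Q j)) / real P"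
    unfolding sum_divide_distrib
  proof (rule sum.cong)
    fix j assume "j \<in> {..<n}"
    then have e: "real P = real (Q j) * (real (B j))^2" using QP by simp
    have "real (Q j) \<noteq> 0"
    proof
      assume "real (Q j) = 0"
      then have "real P = 0" using e by simp
      then show False using Ppos by simp
    qed
    moreover have "real (B j) > 0" using B by auto
    ultimately show "(real (A j) / real (B j))^2 = real (A j * A j * Q j) / real P"
      unfolding e by (simp add: field_simps power2_eq_square)
  qed simp
  also have "\<dots> = real (\<Sum>j<n. A j * A j * Q j) / real P" by simp
  finally have E: "(\<Sum>j<n. (real (A j) / real (B j))^2) = real (\<Sum>j<n. A j * A j * Q j) / real P" .
  have "real (\<Sum>j<n. A j * A j * Q j) / real P < (real p / real d)^2 \<longleftrightarrow>
        real (\<Sum>j<n. A j * A j * Q j) * (real d * real d) < real p * real p * real P"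
    using Ppos d by (simp add: field_simps power2_eq_square)
  also have "\<dots> \<longleftrightarrow> (\<Sum>j<n. A j * A j * Q j) * (d * d) < p * p * P"
    by (simp only: of_nat_mult[symmetric] of_nat_less_iff)
  finally show ?thesis unfolding E P_def[symmetric] Q_def[symmetric] by simp
qed

lemma dist_lt_iff:
  fixes x y :: "real ^ 'n::finite"
  shows "dist x y < R \<longleftrightarrow> (\<Sum>j<CARD('n). (x $ (inv_into UNIV coord_idx j) - y $ (inv_into UNIV coord_idx j))^2) < R^2 \<and> 0 < R"
proof -
  have bij: "bij_betw (coord_idx :: 'n \<Rightarrow> nat) UNIV {..<CARD('n)}" by (rule coord_bij)
  have inv: "inv_into UNIV coord_idx (coord_idx i) = i" for i :: 'n
    using bij by (simp add: bij_betw_def)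
  define G where "G j = (x $ (inv_into UNIV coord_idx j) - y $ (inv_into UNIV coord_idx j))^2" for j
  have R: "(\<Sum>i\<in>UNIV. H (coord_idx (i::'n))) = (\<Sum>j<CARD('n). H j)" for H :: "nat \<Rightarrow> real"
    by (rule sum.reindex_bij_betw[OF bij])
  have "(\<Sum>j<CARD('n). G j) = (\<Sum>i\<in>UNIV. G (coord_idx (i::'n)))"
    by (rule R[symmetric])
  also have "\<dots> = (\<Sum>i\<in>UNIV. (dist (x$i) (y$i))^2)" by (simp add: G_def inv dist_real_def)
  finally have S: "(\<Sum>j<CARD('n). (x $ (inv_into UNIV coord_idx j) - y $ (inv_into UNIV coord_idx j))^2) = (\<Sum>i\<in>UNIV. (dist (x$i) (y$i))^2)"
    unfolding G_def .
  have nn: "0 \<le> (\<Sum>i\<in>UNIV. (dist (x$i) (y$i))^2)" by (simp add: sum_nonneg)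
  have "dist x y = sqrt (\<Sum>i\<in>UNIV. (dist (x$i) (y$i))^2)" by (simp add: dist_vec_def L2_set_def)
  moreover have "sqrt s < R \<longleftrightarrow> s < R^2 \<and> 0 < R" if "0 \<le> s" for s
  proof (cases "0 < R")
    case True
    have sq: "sqrt (R^2) = R" using True by simp
    have "sqrt s < R \<longleftrightarrow> sqrt s < sqrt (R^2)" by (simp only: sq)
    also have "\<dots> \<longleftrightarrow> s < R^2" by (rule real_sqrt_less_iff)
    finally show ?thesis using True by simp
  next
    case False
    have "0 \<le> sqrt s" using \<open>0 \<le> s\<close> by simp
    then show ?thesis using False by linarith
  qed
  ultimately show ?thesis using S nn by simp
qed

lemma center_comp: "(center e :: real ^ 'n::finite) $ inv_into UNIV coord_idx j = rat_of_code (lnth (fst (prod_decode e)) j)"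
  if "j < CARD('n)"
proof -
  have bij: "bij_betw (coord_idx :: 'n \<Rightarrow> nat) UNIV {..<CARD('n)}" by (rule coord_bij)
  have "coord_idx (inv_into UNIV coord_idx j :: 'n) = j"
    using bij that by (simp add: bij_betw_def f_inv_into_f)
  then show ?thesis by (simp add: center_def lnth_correct)
qed

lemma rat_code_surj: "(q::real) \<in> \<rat> \<Longrightarrow> \<exists>k. rat_of_code k = q"
proof -
  assume "q \<in> \<rat>"
  then obtain i :: int and m :: nat where m: "m \<noteq> 0" and q: "q = real_of_int i / real m"
    unfolding Rats_eq_int_div_nat by auto
  define k where "k = prod_encode (if i \<ge> 0 then 0 else 1, prod_encode (nat \<bar>i\<bar>, m - 1))"
  have "rat_of_code k = (if i \<ge> 0 then 1 else -1) * real (nat \<bar>i\<bar>) / real m"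
    using m unfolding rat_code k_def rs_def rp_def rd_def by simp
  also have "\<dots> = q" unfolding q by (cases "i \<ge> 0") auto
  finally show ?thesis by blast
qed

lemma center_surj:
  fixes q :: "real ^ 'n::finite"
  assumes "\<And>i. q $ i \<in> \<rat>"
  shows "\<exists>e. center e = q"
proof -
  have "\<forall>i. \<exists>k. rat_of_code k = q $ i" using rat_code_surj assms by blast
  then have "\<exists>k. \<forall>i. rat_of_code (k i) = q $ i" by (rule choice)
  then obtain k where k: "\<And>i. rat_of_code (k i) = q $ i" by blast
  have bij: "bij_betw (coord_idx :: 'n \<Rightarrow> nat) UNIV {..<CARD('n)}" by (rule coord_bij)
  have inv: "inv_into UNIV coord_idx (coord_idx i) = i" for i :: 'n
    using bij by (simp add: bij_betw_def)
  have lt: "coord_idx i < CARD('n)" for i :: 'n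
    using bij by (auto simp: bij_betw_def)
  define L where "L = map (\<lambda>j. k (inv_into UNIV (coord_idx :: 'n \<Rightarrow> nat) j)) [0..<CARD('n)]"
  have "(center (prod_encode (list_encode L, 0)) :: real^'n) = q"
    unfolding center_def L_def by (simp add: vec_eq_iff arg.simps lt inv k)
  then show ?thesis by blast
qed

lemma open_rat:
  fixes S :: "(real ^ 'n::finite) set"
  assumes "open S" "S \<noteq> {}"
  shows "\<exists>e. center e \<in> S"
proof -
  obtain x where x: "x \<in> S" using assms by auto
  obtain \<epsilon> where \<epsilon>: "\<epsilon> > 0" "ball x \<epsilon> \<subseteq> S" using assms(1) x open_contains_ball by blast
  have pos: "\<epsilon> / CARD('n) > 0" using \<epsilon> by simp
  have "\<forall>i. \<exists>r. r \<in> \<rat> \<and> \<bar>r - x $ i\<bar> < \<epsilon> / CARD('n)"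
    using rational_approximation[OF pos] by blast
  then have "\<exists>r. \<forall>i. r i \<in> \<rat> \<and> \<bar>r i - x $ i\<bar> < \<epsilon> / CARD('n)" by (rule choice)
  then obtain r where r: "\<And>i. r i \<in> \<rat>" "\<And>i. \<bar>r i - x $ i\<bar> < \<epsilon> / CARD('n)" by blast
  define q where "q = (\<chi> i. r i)"
  have "dist x q = norm (x - q)" by (simp add: dist_norm)
  also have "\<dots> \<le> (\<Sum>i\<in>UNIV. \<bar>(x - q) $ i\<bar>)" by (rule norm_le_l1_cart)
  also have "\<dots> < (\<Sum>i\<in>(UNIV::'n set). \<epsilon> / CARD('n))"
    by (rule sum_strict_mono) (use r in \<open>auto simp: q_def abs_minus_commute\<close>)
  also have "\<dots> = \<epsilon>" by simp
  finally have "q \<in> S" using \<epsilon> by auto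
  moreover obtain e where "center e = q" using center_surj[of q] r by (auto simp: q_def)
  ultimately show ?thesis by blast
qed




lemma memtest_correct: "memtest CARD('n) e a = 0 \<longleftrightarrow> (center e :: real ^ 'n::finite) \<in> beta a"
proof -
  let ?n = "CARD('n)"
  let ?u = "fst (prod_decode a)" and ?v = "fst (prod_decode e)" and ?r = "snd (prod_decode a)"
  have "(center e :: real^'n) \<in> beta a \<longleftrightarrow> dist (center a) (center e :: real^'n) < radius a"
    by (simp add: beta_eq)
  also have "\<dots> \<longleftrightarrow> (\<Sum>j<?n. (rat_of_code (lnth ?u j) - rat_of_code (lnth ?v j))^2) < (radius a)^2 \<and> 0 < radius a"
  proof -
    have "(\<Sum>j<?n. ((center a :: real^'n) $ inv_into UNIV coord_idx j - (center e :: real^'n) $ inv_into UNIV coord_idx j)^2)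
      = (\<Sum>j<?n. (rat_of_code (lnth ?u j) - rat_of_code (lnth ?v j))^2)"
      by (rule sum.cong) (simp_all add: center_comp)
    then show ?thesis by (simp only: dist_lt_iff)
  qed
  also have "\<dots> \<longleftrightarrow> (\<Sum>j<?n. (real (mA ?u ?v j) / real (mB ?u ?v j))^2) < (radius a)^2 \<and> 0 < radius a"
  proof -
    have "(rat_of_code (lnth ?u j) - rat_of_code (lnth ?v j))^2 = (real (mA ?u ?v j) / real (mB ?u ?v j))^2" for j
      by (subst power2_abs[symmetric]) (simp only: adiff_correct mA_def mB_def)
    then show ?thesis by simp
  qed
  finally have M: "(center e :: real^'n) \<in> beta a \<longleftrightarrow> (\<Sum>j<?n. (real (mA ?u ?v j) / real (mB ?u ?v j))^2) < (radius a)^2 \<and> 0 < radius a" .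
  have Bpos: "mB ?u ?v j > 0" for j by (simp add: mB_def bb_def rd_def)
  have dpos: "rd ?r > 0" by (simp add: rd_def)
  define \<Sigma> where "\<Sigma> = (\<Sum>j<?n. (real (mA ?u ?v j) / real (mB ?u ?v j))^2)"
  have nn: "0 \<le> \<Sigma>" unfolding \<Sigma>_def by (rule sum_nonneg) simp
  have M': "(center e :: real^'n) \<in> beta a \<longleftrightarrow> \<Sigma> < (radius a)^2 \<and> 0 < radius a"
    unfolding \<Sigma>_def by (rule M)
  show ?thesis
  proof (cases "rs ?r = 0")
    case True
    then have rad: "radius a = real (rp ?r) / real (rd ?r)" by (simp add: radius_def rat_code)
    have rge: "radius a \<ge> 0" using rad by simp
    have imp: "\<Sigma> < (radius a)^2 \<Longrightarrow> 0 < radius a"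
    proof (rule ccontr)
      assume "\<Sigma> < (radius a)^2" "\<not> 0 < radius a"
      then have "radius a = 0" using rge by linarith
      then show False using \<open>\<Sigma> < (radius a)^2\<close> nn by simp
    qed
    have "(center e :: real^'n) \<in> beta a \<longleftrightarrow> \<Sigma> < (real (rp ?r) / real (rd ?r))^2"
      using M' imp unfolding rad by blast
    also have "\<dots> \<longleftrightarrow> mS ?n ?u ?v * (rd ?r * rd ?r) < rp ?r * rp ?r * mP ?n ?u ?v"
      unfolding \<Sigma>_def mS_def mP_def mQ_def by (rule key_ineq[OF Bpos dpos])
    also have "\<dots> \<longleftrightarrow> memtest ?n e a = 0"
      unfolding memtest_def using True by (simp only: if_True refl) simp
    finally show ?thesis by (rule sym)
  next
    case False
    then have "radius a \<le> 0" by (simp add: radius_def rat_code)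
    then have "(center e :: real^'n) \<notin> beta a" unfolding M' by linarith
    moreover have "memtest ?n e a = 1" unfolding memtest_def using False by simp
    ultimately show ?thesis by simp
  qed
qed

theorem lemma4p3:
  fixes U C :: "(real ^ 'n::finite) set"
  assumes "eff_open U"
    and "C \<in> components U"
  shows "eff_open C"
proof -
  obtain W where W: "ce W" "U = (\<Union>a\<in>W. beta a)" using assms(1) unfolding eff_open_def by blast
  obtain f0 where f0: "W = {x. \<exists>y. eval_recf f0 [x, y] = 0}" using W(1) unfolding ce_def by blast
  have Cne: "C \<noteq> {}" using assms(2) by (rule in_components_nonempty)
  have CU: "C \<subseteq> U" using assms(2) by (rule in_components_subset)
  have Cconn: "connected C" using assms(2) by (rule in_components_connected)
  have obeta: "open (beta a :: (real^'n) set)" for a by (simp add: beta_eq)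
  have cbeta: "connected (beta a :: (real^'n) set)" for a by (simp add: beta_eq)
  obtain p where pC: "p \<in> C" using Cne by blast
  then obtain a0 where a0W: "a0 \<in> W" and pa0: "p \<in> beta a0" using CU W(2) by blast
  obtain y0 where y0: "eval_recf f0 [a0, y0] = 0" using a0W f0 by blast
  have ballC: "beta a \<subseteq> C" if "a \<in> W" "beta a \<inter> C \<noteq> {}" for a
  proof (rule components_maximal[OF assms(2) cbeta])
    show "beta a \<subseteq> U" using that W(2) by blast
    show "C \<inter> beta a \<noteq> {}" using that by blast
  qed
  let ?R = "reach CARD('n) a0 f0"
  have Rsub: "x \<in> W \<and> (beta x :: (real^'n) set) \<subseteq> C" if "x \<in> ?R" for x
    using that
  proof (induction rule: reach.induct)
    case (r0 y)
    then show ?case using a0W ballC pa0 pC by blast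
  next
    case (rS a b y e)
    have bW: "b \<in> W" using rS f0 by blast
    have "(center e :: real^'n) \<in> beta a" "(center e :: real^'n) \<in> beta b"
      using rS memtest_correct by blast+
    then have "beta b \<inter> C \<noteq> {}" using rS by blast
    then show ?case using bW ballC by blast
  qed
  have "C = (\<Union>a\<in>?R. beta a)"
  proof
    show "(\<Union>a\<in>?R. beta a) \<subseteq> C" using Rsub by blast
  next
    define V where "V = (\<Union>a\<in>?R. beta a :: (real^'n) set)"
    define V' where "V' = (\<Union>a\<in>W - ?R. beta a :: (real^'n) set)"
    have oV: "open V" unfolding V_def using obeta by blast
    have oV': "open V'" unfolding V'_def using obeta by blast
    have cover: "C \<subseteq> V \<union> V'" using CU W(2) unfolding V_def V'_def by blast
    have disj: "V \<inter> V' \<inter> C = {}"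
    proof (rule ccontr)
      assume "V \<inter> V' \<inter> C \<noteq> {}"
      then obtain x :: "real^'n" and a b where a: "a \<in> ?R" "x \<in> beta a" and b: "b \<in> W" "b \<notin> ?R" "x \<in> beta b"
        unfolding V_def V'_def by blast
      have "open (beta a \<inter> beta b :: (real^'n) set)" using obeta by blast
      moreover have "(beta a \<inter> beta b :: (real^'n) set) \<noteq> {}" using a b by blast
      ultimately obtain e where "(center e :: real^'n) \<in> beta a \<inter> beta b" using open_rat by blast
      then have "memtest CARD('n) e a = 0" "memtest CARD('n) e b = 0" using memtest_correct by blast+
      moreover obtain y where "eval_recf f0 [b, y] = 0" using b f0 by blast
      ultimately have "b \<in> ?R" using a reach.rS by blast
      then show False using b by blast
    qed
    have "V \<inter> C = {} \<or> V' \<inter> C = {}" by (rule connectedD[OF Cconn oV oV' disj cover])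
    moreover have "a0 \<in> ?R" using y0 by (rule reach.r0)
    then have "p \<in> V \<inter> C" using pa0 pC unfolding V_def by blast
    ultimately have "V' \<inter> C = {}" by blast
    then show "C \<subseteq> (\<Union>a\<in>?R. beta a)" using cover unfolding V_def by blast
  qed
  then show ?thesis unfolding eff_open_def using ce_reach by blast
qed


end
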